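(* Let $I$ be an instance of 2-SCSS-$(k,1)$ given by a directed graph $G=(V,E)$ with edge weights $\omega:E\to\mathbb{R}^{\geq 0}$ and terminals $s,t$, and let $I'$ be the Token Game constructed from $I$ as described in the context. Then $\mathrm{OPT}(I)\geq \mathrm{OPT}(I')$.
   Context: 2-SCSS-$(k,1)$: find $k$ paths $F_1,\dots,F_k$ from $s$ to $t$ and one path $B$ from $t$ to $s$ minimizing $\sum_{e\in E}\omega(e)\max\{|\{i: e\in F_i\}|,\ [e\in B]\}$; $\mathrm{OPT}(I)$ is this minimum. The Token Game $I'$: tokens $\mathbf{b},\mathbf{f}_1,\dots,\mathbf{f}_k$; states are vectors $\bar v=(v_0,v_1,\dots,v_k)\in V^{k+1}$ ($v_0$ the location of $\mathbf{b}$, $v_i$ that of $\mathbf{f}_i$); start state $(s,\dots,s)$, end state $(t,\dots,t)$. From each state $\bar v$ the moves are: (Backward) for each edge $(w,v_0)\in E$, move to the state obtained by replacing $v_0$ by $w$, at cost $\omega(w,v_0)$; (Forward) for each $i\in[k]$ and each edge $(v_i,x)\in E$, move to the state obtained by replacing $v_i$ by $x$, at cost $\omega(v_i,x)$; (Flip) for each $i\in[k]$, move to the state obtained by swapping $v_0$ and $v_i$ (new coordinate $0$ is $v_i$, new coordinate $i$ is $v_0$, others unchanged), at cost equal to the weight of a shortest $v_i\leadsto v_0$ path in $G$. $\mathrm{OPT}(I')$ is the minimum total cost of a sequence of moves from the start state to the end state. *)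

theory Defs
  imports Main "HOL-Library.Extended_Real"
begin

definition is_path :: "('a \<times> 'a) set \<Rightarrow> 'a list \<Rightarrow> 'a \<Rightarrow> 'a \<Rightarrow> bool" where
  "is_path E p u v \<longleftrightarrow> p \<noteq> [] \<and> hd p = u \<and> last p = v \<and> distinct p \<and>
     (\<forall>j. Suc j < length p \<longrightarrow> (p ! j, p ! Suc j) \<in> E)"

definition path_edges :: "'a list \<Rightarrow> ('a \<times> 'a) set" where
  "path_edges p = {(p ! j, p ! Suc j) | j. Suc j < length p}"

definition path_weight :: "('a \<times> 'a \<Rightarrow> real) \<Rightarrow> 'a list \<Rightarrow> real" where
  "path_weight w p = (\<Sum>j<length p - 1. w (p ! j, p ! Suc j))"

text \<open>Weight of a shortest u-to-v path (infinity if none exists).\<close>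
definition sp_dist :: "('a \<times> 'a) set \<Rightarrow> ('a \<times> 'a \<Rightarrow> real) \<Rightarrow> 'a \<Rightarrow> 'a \<Rightarrow> ereal" where
  "sp_dist E w u v = (INF p \<in> {p. is_path E p u v}. ereal (path_weight w p))"

definition scss_feasible :: "('a \<times> 'a) set \<Rightarrow> nat \<Rightarrow> 'a \<Rightarrow> 'a \<Rightarrow> (nat \<Rightarrow> 'a list) \<Rightarrow> 'a list \<Rightarrow> bool" where
  "scss_feasible E k s t F B \<longleftrightarrow> (\<forall>i\<in>{1..k}. is_path E (F i) s t) \<and> is_path E B t s"

definition scss_cost :: "('a \<times> 'a) set \<Rightarrow> ('a \<times> 'a \<Rightarrow> real) \<Rightarrow> nat \<Rightarrow> (nat \<Rightarrow> 'a list) \<Rightarrow> 'a list \<Rightarrow> real" where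
  "scss_cost E w k F B = (\<Sum>e\<in>E. w e * real (max (card {i\<in>{1..k}. e \<in> path_edges (F i)})
                                            (if e \<in> path_edges B then 1 else 0)))"

definition OPT_scss :: "'a set \<Rightarrow> ('a \<times> 'a) set \<Rightarrow> ('a \<times> 'a \<Rightarrow> real) \<Rightarrow> nat \<Rightarrow> 'a \<Rightarrow> 'a \<Rightarrow> ereal" where
  "OPT_scss V E w k s t =
     (INF FB \<in> {(F, B). scss_feasible E k s t F B}. ereal (scss_cost E w k (fst FB) (snd FB)))"

text \<open>Token game. A state is a list of length k+1: entry 0 is the position of token b,
 entry i (1 \<le> i \<le> k) the position of token f_i. A single move from state x to y with cost c:\<close>
inductive token_move :: "('a \<times> 'a) set \<Rightarrow> ('a \<times> 'a \<Rightarrow> real) \<Rightarrow> nat \<Rightarrow> 'a list \<Rightarrow> 'a list \<Rightarrow> ereal \<Rightarrow> bool"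
  for E w k where
  backward: "(u, x ! 0) \<in> E \<Longrightarrow> token_move E w k x (x[0 := u]) (ereal (w (u, x ! 0)))"
| forward: "i \<in> {1..k} \<Longrightarrow> (x ! i, y) \<in> E \<Longrightarrow> token_move E w k x (x[i := y]) (ereal (w (x ! i, y)))"
| flip: "i \<in> {1..k} \<Longrightarrow> token_move E w k x (x[0 := x ! i, i := x ! 0]) (sp_dist E w (x ! i) (x ! 0))"

inductive token_reach :: "('a \<times> 'a) set \<Rightarrow> ('a \<times> 'a \<Rightarrow> real) \<Rightarrow> nat \<Rightarrow> 'a list \<Rightarrow> 'a list \<Rightarrow> ereal \<Rightarrow> bool"
  for E w k where
  refl: "token_reach E w k x x 0"
| step: "token_move E w k x y c \<Longrightarrow> token_reach E w k y z d \<Longrightarrow> token_reach E w k x z (c + d)"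

definition OPT_token :: "'a set \<Rightarrow> ('a \<times> 'a) set \<Rightarrow> ('a \<times> 'a \<Rightarrow> real) \<Rightarrow> nat \<Rightarrow> 'a \<Rightarrow> 'a \<Rightarrow> ereal" where
  "OPT_token V E w k s t =
     (INF c \<in> {c. token_reach E w k (replicate (Suc k) s) (replicate (Suc k) t) c}. c)"

end

theory Submission
  imports Defs
begin

lemma pe_take: assumes "m < length p"
  shows "path_edges (take (Suc m) p) = {(p ! j, p ! Suc j) | j. Suc j < Suc m}"
proof -
  have "length (take (Suc m) p) = Suc m" using assms by simp
  then show ?thesis unfolding path_edges_def
    by (metis (no_types, lifting) Suc_lessD nth_take)
qed

lemma pe_drop: assumes "m < length p"
  shows "path_edges (drop m p) = {(p ! (m + j), p ! (m + Suc j)) | j. Suc j < length p - m}"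
  unfolding path_edges_def using assms by (simp add: add.commute)

lemma pe_take_drop:
  assumes "m < length p"
  shows "path_edges p = path_edges (take (Suc m) p) \<union> path_edges (drop m p)"
proof (rule set_eqI, rule iffI)
  fix e assume "e \<in> path_edges p"
  then obtain j where j: "Suc j < length p" "e = (p ! j, p ! Suc j)" unfolding path_edges_def by auto
  show "e \<in> path_edges (take (Suc m) p) \<union> path_edges (drop m p)"
  proof (cases "j < m")
    case True then show ?thesis using j assms by (auto simp: pe_take)
  next
    case False
    then have "e = (p ! (m + (j - m)), p ! (m + Suc (j - m)))" "Suc (j - m) < length p - m"
      using j by auto
    then show ?thesis using assms by (auto simp: pe_drop)
  qed
next
  fix e assume "e \<in> path_edges (take (Suc m) p) \<union> path_edges (drop m p)"
  then show "e \<in> path_edges p" unfolding pe_take[OF assms] pe_drop[OF assms]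
  proof
    assume "e \<in> {(p ! j, p ! Suc j) |j. Suc j < Suc m}"
    then obtain j where "e = (p ! j, p ! Suc j)" "Suc j < length p" using assms by auto
    then show ?thesis unfolding path_edges_def by auto
  next
    assume "e \<in> {(p ! (m + j), p ! (m + Suc j)) |j. Suc j < length p - m}"
    then obtain j where "e = (p ! (m+j), p ! Suc (m+j))" "Suc (m+j) < length p" by auto
    then show ?thesis unfolding path_edges_def by blast
  qed
qed

lemma pe_take_drop_disj:
  assumes "m < length p" "distinct p"
  shows "path_edges (take (Suc m) p) \<inter> path_edges (drop m p) = {}"
  using assms unfolding pe_take[OF assms(1)] pe_drop[OF assms(1)]
  by (auto simp: nth_eq_iff_index_eq)

lemma pe_image: "path_edges p = (\<lambda>j. (p ! j, p ! Suc j)) ` {..<length p - 1}"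
  unfolding path_edges_def by auto

lemma pw_sum:
  assumes "distinct p"
  shows "path_weight w p = sum w (path_edges p)"
proof -
  have "inj_on (\<lambda>j. (p ! j, p ! Suc j)) {..<length p - 1}"
    using assms by (auto simp: inj_on_def nth_eq_iff_index_eq)
  then show ?thesis unfolding pe_image path_weight_def by (simp add: sum.reindex)
qed

lemma pe_finite: "finite (path_edges p)"
  unfolding pe_image by simp

lemma pw_split:
  assumes "m < length p" "distinct p"
  shows "path_weight w p = path_weight w (take (Suc m) p) + path_weight w (drop m p)"
  using assms pe_take_drop[OF assms(1)] pe_take_drop_disj[OF assms]
  by (simp add: pw_sum sum.union_disjoint pe_finite)

lemma is_path_take:
  assumes "is_path E p u v" "m < length p"
  shows "is_path E (take (Suc m) p) u (p ! m)"
proof -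
  have "last (take (Suc m) p) = p ! m"
    using assms(2) by (subst last_conv_nth) (auto simp: min_def intro!: arg_cong[where f="(!) p"])
  then show ?thesis using assms unfolding is_path_def by auto
qed

lemma is_path_drop:
  assumes "is_path E p u v" "m < length p"
  shows "is_path E (drop m p) (p ! m) v"
  using assms unfolding is_path_def
  by (auto simp: hd_drop_conv_nth)

lemma pe_sub: "is_path E p u v \<Longrightarrow> path_edges p \<subseteq> E"
  unfolding is_path_def path_edges_def by auto

lemma is_path_single: "is_path E p u u \<Longrightarrow> p = [u]"
  unfolding is_path_def
  by (metis distinct.simps(2) hd_Cons_tl last_in_set last_tl list.set_cases neq_Nil_conv)

lemma pe_single: "path_edges [u] = {}"
  unfolding path_edges_def by auto


definition Psi :: "('a \<times> 'a) set \<Rightarrow> ('a \<times> 'a \<Rightarrow> real) \<Rightarrow> nat \<Rightarrow> ('a \<times> 'a) set \<Rightarrow> (nat \<Rightarrow> 'a list) \<Rightarrow> real" where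
  "Psi E w k S R = (\<Sum>e\<in>E. w e * real (max (card {i\<in>{1..k}. e \<in> path_edges (R i)}) (if e \<in> S then 1 else 0)))"

lemma psi_mono:
  assumes "\<And>e. e \<in> E \<Longrightarrow> w e \<ge> 0" "S \<subseteq> S'"
  shows "Psi E w k S R \<le> Psi E w k S' R"
  unfolding Psi_def
proof (rule sum_mono)
  fix e assume "e \<in> E"
  show "w e * real (max (card {i\<in>{1..k}. e \<in> path_edges (R i)}) (if e \<in> S then 1 else 0))
      \<le> w e * real (max (card {i\<in>{1..k}. e \<in> path_edges (R i)}) (if e \<in> S' then 1 else 0))"
    using assms \<open>e \<in> E\<close> by (intro mult_left_mono) auto
qed

lemma psi_b:
  assumes "finite E" "e \<in> S" "e \<in> E" "\<And>i. i \<in> {1..k} \<Longrightarrow> e \<notin> path_edges (R i)"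
  shows "Psi E w k S R = Psi E w k (S - {e}) R + w e"
proof -
  have "Psi E w k S R = (\<Sum>x\<in>E. w x * real (max (card {i\<in>{1..k}. x \<in> path_edges (R i)}) (if x \<in> S - {e} then 1 else 0))
        + (if x = e then w x else 0))"
    unfolding Psi_def
  proof (rule sum.cong)
    fix x assume "x \<in> E"
    show "w x * real (max (card {i\<in>{1..k}. x \<in> path_edges (R i)}) (if x \<in> S then 1 else 0)) =
      w x * real (max (card {i\<in>{1..k}. x \<in> path_edges (R i)}) (if x \<in> S - {e} then 1 else 0))
        + (if x = e then w x else 0)"
      using assms by auto
  qed simp
  also have "\<dots> = Psi E w k (S - {e}) R + w e"
    unfolding Psi_def sum.distrib using assms by simp
  finally show ?thesis .
qed

lemma psi_drop:
  assumes "finite E" "j \<in> {1..k}" "distinct (R j)" "m < length (R j)" "path_edges (R j) \<subseteq> E"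
    "path_edges (take (Suc m) (R j)) \<inter> S = {}"
  shows "Psi E w k S R = Psi E w k S (R(j := drop m (R j))) + path_weight w (take (Suc m) (R j))"
proof -
  define P where "P = path_edges (take (Suc m) (R j))"
  define R' where "R' = R(j := drop m (R j))"
  have split: "path_edges (R j) = P \<union> path_edges (drop m (R j))" "P \<inter> path_edges (drop m (R j)) = {}"
    using pe_take_drop[OF assms(4)] pe_take_drop_disj[OF assms(4,3)] unfolding P_def by auto
  have trm: "w x * real (max (card {i\<in>{1..k}. x \<in> path_edges (R i)}) (if x \<in> S then 1 else 0)) =
      w x * real (max (card {i\<in>{1..k}. x \<in> path_edges (R' i)}) (if x \<in> S then 1 else 0))
        + (if x \<in> P then w x else 0)" for x
  proof (cases "x \<in> P")
    case True
    then have xS: "x \<notin> S" using assms(6) unfolding P_def by auto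
    have "{i\<in>{1..k}. x \<in> path_edges (R i)} = insert j {i\<in>{1..k}. x \<in> path_edges (R' i)}"
      "j \<notin> {i\<in>{1..k}. x \<in> path_edges (R' i)}"
      using True split assms(2) unfolding R'_def by auto
    then have "card {i\<in>{1..k}. x \<in> path_edges (R i)} = Suc (card {i\<in>{1..k}. x \<in> path_edges (R' i)})"
      by simp
    then show ?thesis using True xS by (simp add: algebra_simps)
  next
    case False
    have "{i\<in>{1..k}. x \<in> path_edges (R i)} = {i\<in>{1..k}. x \<in> path_edges (R' i)}"
      using False split unfolding R'_def by auto
    then show ?thesis using False by simp
  qed
  have "Psi E w k S R = Psi E w k S R' + (\<Sum>x\<in>E. if x \<in> P then w x else 0)"
    unfolding Psi_def trm sum.distrib ..
  also have "(\<Sum>x\<in>E. if x \<in> P then w x else 0) = sum w P"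
  proof -
    have "P \<subseteq> E" using split assms(5) by auto
    then have "E \<inter> P = P" by auto
    then show ?thesis using sum.inter_restrict[OF assms(1), of w P] by simp
  qed
  also have "sum w P = path_weight w (take (Suc m) (R j))"
    unfolding P_def using assms(3) by (simp add: pw_sum)
  finally show ?thesis unfolding R'_def .
qed

lemma reach_trans:
  "token_reach E w k x y c \<Longrightarrow> token_reach E w k y z d \<Longrightarrow> token_reach E w k x z (c + d)"
proof (induction arbitrary: z d rule: token_reach.induct)
  case (refl x) then show ?case by simp
next
  case (step x y c z' d')
  then have "token_reach E w k y z (d' + d)" by blast
  then have "token_reach E w k x z (c + (d' + d))" by (rule token_reach.step[OF step.hyps(1)])
  then show ?case by (simp add: add.assoc)
qed

lemma move_reach: "token_move E w k x y c \<Longrightarrow> token_reach E w k x y c"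
  using token_reach.step[OF _ token_reach.refl] by fastforce

lemma pw_take_Suc:
  assumes "Suc m < length r"
  shows "path_weight w (take (Suc (Suc m)) r) = path_weight w (take (Suc m) r) + w (r ! m, r ! Suc m)"
  using assms unfolding path_weight_def by (simp add: min_absorb2)

lemma fwd:
  assumes "j \<in> {1..k}" "length xs = Suc k" "is_path E r (xs ! j) t'" "m < length r"
  shows "token_reach E w k xs (xs[j := r ! m]) (ereal (path_weight w (take (Suc m) r)))"
  using assms(4)
proof (induction m)
  case 0
  have "r ! 0 = xs ! j" using assms(3) unfolding is_path_def by (metis hd_conv_nth)
  moreover have "path_weight w (take (Suc 0) r) = 0" unfolding path_weight_def by simp
  ultimately show ?case by (simp, metis token_reach.refl zero_ereal_def)
next
  case (Suc m)
  let ?y = "xs[j := r ! m]"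
  have IH: "token_reach E w k xs ?y (ereal (path_weight w (take (Suc m) r)))"
    using Suc by simp
  have jl: "j < length xs" using assms(1,2) by auto
  have "(?y ! j, r ! Suc m) \<in> E" using assms(3) Suc.prems jl unfolding is_path_def by simp
  then have "token_move E w k ?y (?y[j := r ! Suc m]) (ereal (w (?y ! j, r ! Suc m)))"
    by (rule token_move.forward[OF assms(1)])
  then have "token_reach E w k ?y (xs[j := r ! Suc m]) (ereal (w (r ! m, r ! Suc m)))"
    using jl by (simp add: move_reach)
  from reach_trans[OF IH this] show ?case
    using pw_take_Suc[OF Suc.prems] by simp
qed


lemma psi_nonneg:
  assumes "\<And>e. e \<in> E \<Longrightarrow> w e \<ge> 0"
  shows "Psi E w k S R \<ge> 0"
  unfolding Psi_def using assms by (intro sum_nonneg) auto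

lemma sp_le:
  assumes "is_path E p u v"
  shows "sp_dist E w u v \<le> ereal (path_weight w p)"
  unfolding sp_dist_def using assms by (intro INF_lower) simp

lemma ereal_le3:
  fixes s c :: ereal
  assumes "s \<le> ereal b" "c \<le> ereal P"
  shows "ereal a + (s + c) \<le> ereal (a + b + P)"
proof -
  have "ereal a + (s + c) \<le> ereal a + (ereal b + ereal P)"
    using assms by (intro add_mono order.refl)
  then show ?thesis by (simp add: add.assoc)
qed

lemma ereal_le2:
  fixes c :: ereal
  assumes "c \<le> ereal P"
  shows "ereal a + c \<le> ereal (a + P)"
proof -
  have "ereal a + c \<le> ereal a + ereal P"
    using assms by (intro add_mono order.refl)
  then show ?thesis by simp
qed


lemma main:
  assumes fin: "finite E" and wpos: "\<And>e. e \<in> E \<Longrightarrow> w e \<ge> 0"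
  shows "length xs = Suc k \<Longrightarrow> is_path E Rb t (xs ! 0) \<Longrightarrow> (\<forall>i\<in>{1..k}. is_path E (R i) (xs ! i) t) \<Longrightarrow>
    \<exists>c. token_reach E w k xs (replicate (Suc k) t) c \<and> c \<le> ereal (Psi E w k (path_edges Rb) R)"
proof (induction "length Rb + (\<Sum>i\<in>{1..k}. length (R i))" arbitrary: xs Rb R rule: less_induct)
  case less
  note IH = less.hyps
  have len: "length xs = Suc k" and pb: "is_path E Rb t (xs ! 0)"
    and pR: "\<And>i. i \<in> {1..k} \<Longrightarrow> is_path E (R i) (xs ! i) t" using less.prems by auto
  show ?case
  proof (cases "xs ! 0 = t")
    case True
    then have Rb1: "Rb = [t]" using pb is_path_single by metis
    then have peRb: "path_edges Rb = {}" by (simp add: pe_single)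
    show ?thesis
    proof (cases "\<exists>j\<in>{1..k}. xs ! j \<noteq> t")
      case False
      have "xs = replicate (Suc k) t"
      proof (rule nth_equalityI)
        show "length xs = length (replicate (Suc k) t)" using len by simp
        fix i assume "i < length xs"
        then show "xs ! i = replicate (Suc k) t ! i"
          using False True len by (cases "i = 0") auto
      qed
      moreover have "0 \<le> Psi E w k (path_edges Rb) R" by (rule psi_nonneg) (rule wpos)
      moreover have "token_reach E w k xs xs 0" by (rule token_reach.refl)
      ultimately show ?thesis
        by (intro exI[of _ 0]) (simp add: zero_ereal_def)
    next
      case True
      then obtain j where j: "j \<in> {1..k}" "xs ! j \<noteq> t" by auto
      have pj: "is_path E (R j) (xs ! j) t" using pR j by auto
      have l2: "1 < length (R j)"
      proof (rule ccontr)
        assume "\<not> 1 < length (R j)"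
        then have "length (R j) = 1" using pj unfolding is_path_def by (cases "R j") auto
        then show False using pj j unfolding is_path_def
          by (metis One_nat_def diff_Suc_1 hd_conv_nth last_conv_nth less_numeral_extra(3) list.size(3))
      qed
      define R' where "R' = R(j := drop 1 (R j))"
      define xs' where "xs' = xs[j := R j ! 1]"
      have reach1: "token_reach E w k xs xs' (ereal (path_weight w (take (Suc 1) (R j))))"
        unfolding xs'_def using fwd[OF j(1) len pj l2] .
      have jl: "j < length xs" "j \<noteq> 0" using j len by auto
      have inv: "length xs' = Suc k" "is_path E Rb t (xs' ! 0)"
        "\<forall>i\<in>{1..k}. is_path E (R' i) (xs' ! i) t"
        using len pb pR jl is_path_drop[OF pj l2] unfolding xs'_def R'_def by auto
      have "(\<Sum>i\<in>{1..k}. length (R' i)) < (\<Sum>i\<in>{1..k}. length (R i))"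
        by (rule sum_strict_mono_ex1) (use j l2 in \<open>auto simp: R'_def\<close>)
      then obtain c where c: "token_reach E w k xs' (replicate (Suc k) t) c"
        "c \<le> ereal (Psi E w k (path_edges Rb) R')"
        using IH[OF _ inv] by auto
      have psi: "Psi E w k (path_edges Rb) R = Psi E w k (path_edges Rb) R' + path_weight w (take (Suc 1) (R j))"
        unfolding R'_def
        by (rule psi_drop[OF fin j(1)]) (use pj l2 peRb pe_sub[OF pj] in \<open>auto simp: is_path_def\<close>)
      have eq: "path_weight w (take (Suc 1) (R j)) + Psi E w k (path_edges Rb) R' = Psi E w k (path_edges Rb) R"
        using psi by simp
      show ?thesis
        using reach_trans[OF reach1 c(1)] ereal_le2[OF c(2), of "path_weight w (take (Suc 1) (R j))"]
        unfolding eq by blast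
    qed
  next
    case False
    define x where "x = xs ! 0"
    define n where "n = length Rb"
    have n2: "2 \<le> n"
    proof (rule ccontr)
      assume "\<not> 2 \<le> n"
      moreover have "0 < n" using pb unfolding is_path_def n_def by simp
      ultimately have "n = 1" by arith
      then obtain a where "Rb = [a]" unfolding n_def by (auto simp: length_Suc_conv)
      then show False using pb False unfolding is_path_def by auto
    qed
    define u where "u = Rb ! (n - 2)"
    have xl: "Rb ! (n - 1) = x" using pb n2 unfolding is_path_def x_def n_def
      by (metis last_conv_nth)
    have n1: "n - 2 < length Rb" "Suc (n - 2) = n - 1" using n2 unfolding n_def by auto
    have ux: "(u, x) \<in> E"
    proof -
      have "Suc (n - 2) < length Rb" using n2 unfolding n_def by auto
      then have "(Rb ! (n - 2), Rb ! Suc (n - 2)) \<in> E" using pb unfolding is_path_def by blast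
      then show ?thesis using n1 xl unfolding u_def by simp
    qed
    have pdrop: "path_edges (drop (n - 2) Rb) = {(u, x)}"
    proof -
      have "{(Rb ! (n - 2 + j), Rb ! (n - 2 + Suc j)) |j. Suc j < length Rb - (n - 2)}
            = {(Rb ! (n - 2 + j), Rb ! (n - 2 + Suc j)) |j. j = 0}"
        using n2 unfolding n_def by (intro Collect_cong) auto
      also have "\<dots> = {(u, x)}" using n1 xl unfolding u_def by auto
      finally show ?thesis unfolding pe_drop[OF n1(1)] .
    qed
    define Rb' where "Rb' = take (Suc (n - 2)) Rb"
    have pRb: "path_edges Rb = path_edges Rb' \<union> {(u, x)}" "(u, x) \<notin> path_edges Rb'"
      using pe_take_drop[OF n1(1)] pe_take_drop_disj[OF n1(1)] pb pdrop
      unfolding Rb'_def is_path_def by auto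
    have pbRb': "is_path E Rb' t u" unfolding Rb'_def u_def by (rule is_path_take[OF pb n1(1)])
    have lRb': "length Rb' < length Rb" unfolding Rb'_def using n1 n2 n_def by auto
    show ?thesis
    proof (cases "\<forall>i\<in>{1..k}. (u, x) \<notin> path_edges (R i)")
      case True
      define xs' where "xs' = xs[0 := u]"
      have mv: "token_move E w k xs xs' (ereal (w (u, x)))"
        unfolding xs'_def x_def by (rule token_move.backward) (use ux x_def in simp)
      have inv: "length xs' = Suc k" "is_path E Rb' t (xs' ! 0)"
        "\<forall>i\<in>{1..k}. is_path E (R i) (xs' ! i) t"
        using len pbRb' pR unfolding xs'_def by auto
      obtain c where c: "token_reach E w k xs' (replicate (Suc k) t) c"
        "c \<le> ereal (Psi E w k (path_edges Rb') R)"
        using IH[OF _ inv] lRb' by auto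
      have psi: "Psi E w k (path_edges Rb) R = Psi E w k (path_edges Rb - {(u, x)}) R + w (u, x)"
        by (rule psi_b[OF fin]) (use pRb ux True in auto)
      have eq: "w (u, x) + Psi E w k (path_edges Rb') R = Psi E w k (path_edges Rb) R"
        using psi pRb by (simp add: Un_Diff)
      show ?thesis
        using token_reach.step[OF mv c(1)] ereal_le2[OF c(2), of "w (u, x)"]
        unfolding eq by blast
    next
      case False
      then obtain j where j: "j \<in> {1..k}" "(u, x) \<in> path_edges (R j)" by auto
      define r where "r = R j"
      have pj: "is_path E r (xs ! j) t" using pR j unfolding r_def by auto
      obtain i where i: "Suc i < length r" "u = r ! i" "x = r ! Suc i"
        using j(2) unfolding r_def path_edges_def by auto
      define px where "px = Suc i"
      define T where "T = set (take (Suc px) r)"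
      define qv where "qv = (LEAST q. q < n \<and> Rb ! q \<in> T)"
      have wit: "n - 2 < n \<and> Rb ! (n - 2) \<in> T"
        using n2 i unfolding T_def px_def u_def[symmetric]
        by (auto simp: in_set_conv_nth intro!: exI[of _ i])
      have qv: "qv < n" "Rb ! qv \<in> T" using LeastI[of "\<lambda>q. q < n \<and> Rb ! q \<in> T", OF wit]
        unfolding qv_def by auto
      have qvle: "qv \<le> n - 2" using Least_le[of "\<lambda>q. q < n \<and> Rb ! q \<in> T", OF wit]
        unfolding qv_def by auto
      have qvmin: "Rb ! b \<notin> T" if b: "b < qv" for b
      proof -
        have "\<not> (b < n \<and> Rb ! b \<in> T)"
          by (rule not_less_Least[of b "\<lambda>q. q < n \<and> Rb ! q \<in> T"]) (use b in \<open>simp add: qv_def\<close>)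
        then show ?thesis using b qv(1) by simp
      qed
      define v where "v = Rb ! qv"
      have pxl: "px < length r" using i unfolding px_def by auto
      obtain pv where pv: "pv < Suc px" "r ! pv = v"
        using qv(2) pxl unfolding T_def v_def by (auto simp: in_set_conv_nth)
      have disj: "path_edges (take (Suc px) r) \<inter> path_edges (take (Suc qv) Rb) = {}"
      proof (rule ccontr)
        assume "path_edges (take (Suc px) r) \<inter> path_edges (take (Suc qv) Rb) \<noteq> {}"
        then obtain a b where ab: "Suc a < Suc px" "Suc b < Suc qv" "r ! a = Rb ! b"
          using qv(1) unfolding n_def pe_take[OF pxl] by (auto simp: pe_take)
        have "Rb ! b \<in> T" using ab pxl unfolding T_def by (auto simp: in_set_conv_nth intro!: exI[of _ a])
        then show False using qvmin ab by auto
      qed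
      define tk where "tk = take (Suc px) r"
      have ptk: "is_path E tk (xs ! j) x" unfolding tk_def i(3) px_def[symmetric]
        by (rule is_path_take[OF pj pxl])
      have pvl: "pv < length tk" using pv pxl unfolding tk_def by auto
      have tkpv: "tk ! pv = v" using pv unfolding tk_def by simp
      have pflip: "is_path E (drop pv tk) v x" using is_path_drop[OF ptk pvl] tkpv by simp
      have pvl': "pv < length r" using pv pxl by auto
      have jl: "j < length xs" "j \<noteq> 0" using j len by auto
      define xs1 where "xs1 = xs[j := r ! pv]"
      have reach1: "token_reach E w k xs xs1 (ereal (path_weight w (take (Suc pv) r)))"
        unfolding xs1_def by (rule fwd[OF j(1) len pj pvl'])
      have x10: "xs1 ! 0 = x" "xs1 ! j = v" using jl pv unfolding xs1_def x_def by auto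
      define xs2 where "xs2 = xs1[0 := xs1 ! j, j := xs1 ! 0]"
      have mv: "token_move E w k xs1 xs2 (sp_dist E w (xs1 ! j) (xs1 ! 0))"
        unfolding xs2_def by (rule token_move.flip[OF j(1)])
      define Rb2 where "Rb2 = take (Suc qv) Rb"
      define R2 where "R2 = R(j := drop px r)"
      have qvl: "qv < length Rb" using qv unfolding n_def by auto
      have inv: "length xs2 = Suc k" "is_path E Rb2 t (xs2 ! 0)"
        "\<forall>i\<in>{1..k}. is_path E (R2 i) (xs2 ! i) t"
      proof -
        show "length xs2 = Suc k" using len unfolding xs2_def xs1_def by simp
        have l1: "length xs1 = Suc k" using len unfolding xs1_def by simp
        then show "is_path E Rb2 t (xs2 ! 0)" using is_path_take[OF pb qvl] jl x10
          unfolding xs2_def Rb2_def v_def by simp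
        show "\<forall>i\<in>{1..k}. is_path E (R2 i) (xs2 ! i) t"
        proof
          fix l assume l: "l \<in> {1..k}"
          show "is_path E (R2 l) (xs2 ! l) t"
          proof (cases "l = j")
            case True
            then show ?thesis using is_path_drop[OF pj pxl] jl x10 i(3) l1 len
              unfolding xs2_def R2_def px_def by simp
          next
            case False
            then have "l \<noteq> 0" "l < length xs" using l len by auto
            then show ?thesis using False pR[OF l] unfolding xs2_def xs1_def R2_def by simp
          qed
        qed
      qed
      have meas: "length Rb2 + (\<Sum>i\<in>{1..k}. length (R2 i)) < length Rb + (\<Sum>i\<in>{1..k}. length (R i))"
      proof -
        have "(\<Sum>i\<in>{1..k}. length (R2 i)) \<le> (\<Sum>i\<in>{1..k}. length (R i))"
          by (rule sum_mono) (auto simp: R2_def r_def)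
        moreover have "length Rb2 < length Rb" using qvle n2 qvl unfolding Rb2_def n_def by auto
        ultimately show ?thesis by linarith
      qed
      obtain c where c: "token_reach E w k xs2 (replicate (Suc k) t) c"
        "c \<le> ereal (Psi E w k (path_edges Rb2) R2)"
        using IH[OF meas inv] by auto
      have sp: "sp_dist E w (xs1 ! j) (xs1 ! 0) \<le> ereal (path_weight w (drop pv tk))"
        unfolding x10 by (rule sp_le[OF pflip])
      have dtk: "distinct tk" using ptk unfolding is_path_def by simp
      have pwsplit: "path_weight w tk = path_weight w (take (Suc pv) r) + path_weight w (drop pv tk)"
        using pw_split[OF pvl dtk] pv unfolding tk_def by (simp add: min_def)
      have psi1: "Psi E w k (path_edges Rb2) R \<le> Psi E w k (path_edges Rb) R"
        by (rule psi_mono) (use wpos pe_take_drop[OF qvl] in \<open>auto simp: Rb2_def\<close>)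
      have psi2: "Psi E w k (path_edges Rb2) R = Psi E w k (path_edges Rb2) R2 + path_weight w tk"
        unfolding R2_def tk_def r_def
        by (rule psi_drop[OF fin j(1)]) (use pj pxl disj pe_sub[OF pj] in \<open>auto simp: is_path_def r_def Rb2_def\<close>)
      have tot: "ereal (path_weight w (take (Suc pv) r)) + (sp_dist E w (xs1 ! j) (xs1 ! 0) + c)
          \<le> ereal (Psi E w k (path_edges Rb) R)"
      proof -
        have "ereal (path_weight w (take (Suc pv) r)) + (sp_dist E w (xs1 ! j) (xs1 ! 0) + c)
          \<le> ereal (path_weight w (take (Suc pv) r) + path_weight w (drop pv tk) + Psi E w k (path_edges Rb2) R2)"
          by (rule ereal_le3[OF sp c(2)])
        also have "\<dots> \<le> ereal (Psi E w k (path_edges Rb) R)"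
          using pwsplit psi1 psi2 by simp
        finally show ?thesis .
      qed
      show ?thesis
        using reach_trans[OF reach1 token_reach.step[OF mv c(1)]] tot by blast
    qed
  qed
qed

theorem lemma6:
  fixes V :: "'a set" and E :: "('a \<times> 'a) set" and w :: "'a \<times> 'a \<Rightarrow> real"
    and k :: nat and s t :: 'a
  assumes "finite V" and "E \<subseteq> V \<times> V"
    and "\<And>e. e \<in> E \<Longrightarrow> w e \<ge> 0"
    and "s \<in> V" and "t \<in> V"
  shows "OPT_scss V E w k s t \<ge> OPT_token V E w k s t"
proof -
  have finE: "finite E" using assms(1,2) finite_subset by blast
  show ?thesis unfolding OPT_scss_def
  proof (rule INF_greatest)
    fix FB assume "FB \<in> {(F, B). scss_feasible E k s t F B}"
    then obtain F B where FB: "FB = (F, B)" "scss_feasible E k s t F B" by auto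
    have "\<exists>c. token_reach E w k (replicate (Suc k) s) (replicate (Suc k) t) c
        \<and> c \<le> ereal (Psi E w k (path_edges B) F)"
      by (rule main[OF finE assms(3)]) (use FB(2) in \<open>auto simp: scss_feasible_def\<close>)
    then obtain c where c: "token_reach E w k (replicate (Suc k) s) (replicate (Suc k) t) c"
      "c \<le> ereal (Psi E w k (path_edges B) F)" by blast
    have "OPT_token V E w k s t \<le> c" unfolding OPT_token_def
      by (rule INF_lower) (use c in simp)
    moreover have "Psi E w k (path_edges B) F = scss_cost E w k (fst FB) (snd FB)"
      unfolding FB Psi_def scss_cost_def by simp
    ultimately show "OPT_token V E w k s t \<le> ereal (scss_cost E w k (fst FB) (snd FB))"
      using c(2) by (metis order.trans)
  qed
qed

end
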